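(* Let $H$ be a fermionic parity-preserving Hamiltonian on $h$. Then $$[H_t,H_{t'}]=0\qquad\text{for all } t,t'\in\{0,\dots,N-1\}.$$ Consequently, with $\mathcal V:=\prod_{t=0}^{N-1}e^{i\epsilon tH_t}$ and any operators $O^{(0)},\dots,O^{(N-1)}$ on $h$, $$\mathcal V\Big(\prod_{t}O^{(t)}_t\Big)\mathcal V^\dagger=\prod_te^{i\epsilon tH_t}O^{(t)}_te^{-i\epsilon tH_t},$$ where both products are taken in the same order of $t$. In other words, each factor is replaced by its Heisenberg-evolved version $(O^{(t)}(\epsilon t))_t$ with $O(s)=e^{isH}Oe^{-isH}$.
   Context: Fix integers $L\ge1$, $N\ge1$ and a real $\epsilon>0$. The space $h$. Let $h$ be the fermionic Fock space of $L$ modes with ladder operators $a_i$ satisfying the canonical anticommutation relations. The space $\mathcal H$. Let $\mathcal H$ be the Fock space generated by $a_{ti}$, $t=0,\dots,N-1$, $i=1,\dots,L$, with $\{a_{ti},a^\dagger_{t'j}\}=\delta_{tt'}\delta_{ij}$ and all other anticommutators zero. In particular, ladder operators at different $t$ anticommute. Placing operators on a slice. For an operator $O$ on $h$, $O_t$ is its image under the unital $*$-homomorphism determined by $a_i\mapsto a_{ti}$. Parity preservation. $H$ is parity preserving if it is an even polynomial in the ladder operators, i.e. each monomial contains an even number of creation/annihilation operators. *)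

theory Defs
  imports "HOL-Analysis.Analysis" "Jordan_Normal_Form.Schur_Decomposition"
begin

text \<open>Fermionic Fock space of M modes: dimension 2^M, basis vectors indexed by
  occupation bit strings n < 2^M (bit k of n = occupation of mode k).
  Operators are complex 2^M x 2^M matrices.\<close>

definition occ :: "nat \<Rightarrow> nat \<Rightarrow> bool" where
  "occ n k \<longleftrightarrow> odd (n div 2 ^ k)"

text \<open>Annihilation operator of mode k (Jordan-Wigner convention):
  a_k |n> = (-1)^(number of occupied modes below k) |n - 2^k> if mode k occupied, else 0.\<close>
definition ann :: "nat \<Rightarrow> nat \<Rightarrow> complex mat" where
  "ann M k = mat (2 ^ M) (2 ^ M) (\<lambda>(r, c).
     if occ c k \<and> r + 2 ^ k = c
     then (-1) ^ card {l. l < k \<and> occ c l} else 0)"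

definition ladder_ops :: "nat \<Rightarrow> complex mat set" where
  "ladder_ops M = {ann M k | k. k < M} \<union> {mat_adjoint (ann M k) | k. k < M}"

definition mprod :: "nat \<Rightarrow> complex mat list \<Rightarrow> complex mat" where
  "mprod n xs = foldr (\<lambda>A B. A * B) xs (1\<^sub>m n)"

text \<open>Even polynomial in the ladder operators: a finite linear combination of
  monomials (words in ladder operators), each containing an even number of factors.\<close>
definition parity_preserving :: "nat \<Rightarrow> complex mat \<Rightarrow> bool" where
  "parity_preserving M H \<longleftrightarrow>
     (\<exists>ws :: (complex \<times> complex mat list) list.
        (\<forall>(c, w) \<in> set ws. even (length w) \<and> set w \<subseteq> ladder_ops M) \<and>
        H = foldr (\<lambda>(c, w) S. c \<cdot>\<^sub>m mprod (2 ^ M) w + S) ws (0\<^sub>m (2 ^ M) (2 ^ M)))"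

definition hermitian_mat :: "complex mat \<Rightarrow> bool" where
  "hermitian_mat A \<longleftrightarrow> mat_adjoint A = A"

definition unital_star_hom :: "nat \<Rightarrow> nat \<Rightarrow> (complex mat \<Rightarrow> complex mat) \<Rightarrow> bool" where
  "unital_star_hom n m \<phi> \<longleftrightarrow>
     (\<forall>A \<in> carrier_mat n n. \<phi> A \<in> carrier_mat m m) \<and>
     (\<forall>A \<in> carrier_mat n n. \<forall>B \<in> carrier_mat n n.
        \<phi> (A + B) = \<phi> A + \<phi> B \<and> \<phi> (A * B) = \<phi> A * \<phi> B) \<and>
     (\<forall>c. \<forall>A \<in> carrier_mat n n. \<phi> (c \<cdot>\<^sub>m A) = c \<cdot>\<^sub>m \<phi> A) \<and>
     (\<forall>A \<in> carrier_mat n n. \<phi> (mat_adjoint A) = mat_adjoint (\<phi> A)) \<and>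
     \<phi> (1\<^sub>m n) = 1\<^sub>m m"

text \<open>The big space \<H> has N*L modes; the mode (t,i) (t < N, i < L) is mode t*L+i.
  slice L N t O = O_t, the image of O under the unital *-homomorphism
  determined by a_i \<mapsto> a_{ti} (normalised to 0 off the carrier to make it unique).\<close>
definition slice :: "nat \<Rightarrow> nat \<Rightarrow> nat \<Rightarrow> complex mat \<Rightarrow> complex mat" where
  "slice L N t = (THE \<phi>. unital_star_hom (2 ^ L) (2 ^ (N * L)) \<phi> \<and>
      (\<forall>i < L. \<phi> (ann L i) = ann (N * L) (t * L + i)) \<and>
      (\<forall>A. A \<notin> carrier_mat (2 ^ L) (2 ^ L) \<longrightarrow> \<phi> A = 0\<^sub>m (2 ^ (N * L)) (2 ^ (N * L))))"

definition mexp :: "complex mat \<Rightarrow> complex mat" where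
  "mexp A = mat (dim_row A) (dim_col A)
     (\<lambda>(i, j). \<Sum>k. (A ^\<^sub>m k) $$ (i, j) / of_nat (fact k))"

end

theory Submission
  imports Defs
begin

unbundle bit_operations_syntax


lemma mult_entry:
  assumes "A \<in> carrier_mat n k" "B \<in> carrier_mat k m" "i < n" "j < m"
  shows "(A * B) $$ (i, j) = (\<Sum>l<k. A $$ (i, l) * B $$ (l, j))"
  using assms by (auto simp: scalar_prod_def atLeast0LessThan intro!: sum.cong)

lemma adj_carrier[simp]: "A \<in> carrier_mat n m \<Longrightarrow> mat_adjoint A \<in> carrier_mat m n"
  by (auto simp: mat_adjoint_def mat_of_rows_def)

lemma adj_dims[simp]: "dim_row (mat_adjoint A) = dim_col A" "dim_col (mat_adjoint A) = dim_row A"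
  by (auto simp: mat_adjoint_def mat_of_rows_def)

lemma adj_entry[simp]: "i < dim_col A \<Longrightarrow> j < dim_row A \<Longrightarrow> mat_adjoint A $$ (i, j) = cnj (A $$ (j, i))"
  by (auto simp: mat_adjoint_def mat_of_rows_def)

lemma occ_bit: "occ n k = bit n k"
  by (simp add: occ_def bit_iff_odd)

lemma lt_pow_bit: "(n::nat) < 2 ^ M \<longleftrightarrow> (\<forall>k. bit n k \<longrightarrow> k < M)"
proof -
  have "n < 2 ^ M \<longleftrightarrow> take_bit M n = n" by (simp add: take_bit_nat_eq_self_iff)
  also have "\<dots> \<longleftrightarrow> (\<forall>k. bit n k \<longrightarrow> k < M)"
    by (auto simp: bit_eq_iff bit_take_bit_iff)
  finally show ?thesis .
qed




definition mid :: "nat \<Rightarrow> nat \<Rightarrow> nat \<Rightarrow> nat" where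
  "mid a L n = take_bit L (drop_bit a n)"

definition agree :: "nat \<Rightarrow> nat \<Rightarrow> nat \<Rightarrow> nat \<Rightarrow> bool" where
  "agree a L r c \<longleftrightarrow> (\<forall>l. (l < a \<or> a + L \<le> l) \<longrightarrow> bit r l = bit c l)"

definition pcb :: "nat \<Rightarrow> nat \<Rightarrow> nat" where
  "pcb k n = card {l. l < k \<and> bit n l}"

definition repl :: "nat \<Rightarrow> nat \<Rightarrow> nat \<Rightarrow> nat \<Rightarrow> nat" where
  "repl a L r j = take_bit a r OR push_bit a j OR push_bit (a + L) (drop_bit (a + L) r)"

lemma bit_mid: "bit (mid a L n) l \<longleftrightarrow> l < L \<and> bit n (a + l)"
  by (auto simp: mid_def bit_take_bit_iff bit_drop_bit_eq)

lemma mid_lt: "mid a L n < 2 ^ L"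
  by (simp add: mid_def)

lemma bit_small: "(j::nat) < 2 ^ L \<Longrightarrow> bit j k \<Longrightarrow> k < L"
  using lt_pow_bit by blast

lemma bit_repl: "j < 2 ^ L \<Longrightarrow> bit (repl a L r j) l \<longleftrightarrow>
   (if l < a then bit r l else if l < a + L then bit j (l - a) else bit r l)"
  using bit_small[of j L "l - a"]
  by (auto simp: repl_def bit_or_iff bit_take_bit_iff bit_push_bit_iff bit_drop_bit_eq)

lemma repl_lt: "r < 2 ^ K \<Longrightarrow> j < 2 ^ L \<Longrightarrow> a + L \<le> K \<Longrightarrow> repl a L r j < 2 ^ K"
  unfolding lt_pow_bit
proof (intro allI impI)
  fix k assume h: "\<forall>k. bit r k \<longrightarrow> k < K" "\<forall>k. bit j k \<longrightarrow> k < L" "a + L \<le> K"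
    "bit (repl a L r j) k"
  have jl: "j < 2 ^ L" using h(2) lt_pow_bit by blast
  show "k < K"
  proof (cases "k < a + L")
    case True then show ?thesis using h(3) by simp
  next
    case False then show ?thesis using h(1,4) bit_repl[OF jl, of a r k] by auto
  qed
qed

lemma mid_repl: "j < 2 ^ L \<Longrightarrow> mid a L (repl a L r j) = j"
  by (auto simp: bit_eq_iff bit_mid bit_repl dest: bit_small)

lemma agree_repl: "j < 2 ^ L \<Longrightarrow> agree a L r (repl a L r j)"
  by (auto simp: agree_def bit_repl)

lemma repl_mid: "agree a L r k \<Longrightarrow> repl a L r (mid a L k) = k"
  by (auto simp: bit_eq_iff bit_mid bit_repl mid_lt agree_def)

lemma agree_refl: "agree a L r r" by (simp add: agree_def)
lemma agree_sym: "agree a L r c \<Longrightarrow> agree a L c r" by (simp add: agree_def)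
lemma agree_trans: "agree a L r k \<Longrightarrow> agree a L k c \<Longrightarrow> agree a L r c" by (simp add: agree_def)

lemma agree_mid_eq: assumes "agree a L r c" "mid a L r = mid a L c" shows "r = c"
proof (rule bit_eqI)
  fix n have h: "\<forall>l. l < a \<or> a + L \<le> l \<longrightarrow> bit r l = bit c l" "mid a L r = mid a L c"
    using assms unfolding agree_def by auto
  show "bit r n = bit c n"
  proof (cases "n < a \<or> a + L \<le> n")
    case True then show ?thesis using h by auto
  next
    case False
    then have "bit (mid a L r) (n - a) = bit (mid a L c) (n - a)" using h by simp
    moreover have "n - a < L" "a + (n - a) = n" using False by arith+
    ultimately show ?thesis by (simp add: bit_mid)
  qed
qed

lemma agree_pcb: "agree a L r c \<Longrightarrow> pcb a r = pcb a c"
  unfolding pcb_def agree_def by (rule arg_cong[where f=card]) auto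

lemma sum_window:
  assumes "r < 2 ^ K" "a + L \<le> K"
  shows "(\<Sum>k<2 ^ K. if agree a L r k then g (mid a L k) k else 0)
       = (\<Sum>j<2 ^ L. g j (repl a L r j))"
proof -
  have "(\<Sum>k<2 ^ K. if agree a L r k then g (mid a L k) k else 0)
      = (\<Sum>k\<in>{k. k < 2 ^ K \<and> agree a L r k}. g (mid a L k) k)"
    by (simp add: sum.If_cases Collect_conj_eq lessThan_def Int_commute)
  also have "{k. k < 2 ^ K \<and> agree a L r k} = repl a L r ` {..<2 ^ L}"
  proof
    show "{k. k < 2 ^ K \<and> agree a L r k} \<subseteq> repl a L r ` {..<2 ^ L}"
    proof
      fix x assume "x \<in> {k. k < 2 ^ K \<and> agree a L r k}"
      then have "x = repl a L r (mid a L x)" using repl_mid by auto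
      then show "x \<in> repl a L r ` {..<2 ^ L}" using mid_lt by blast
    qed
    show "repl a L r ` {..<2 ^ L} \<subseteq> {k. k < 2 ^ K \<and> agree a L r k}"
      using repl_lt[OF assms(1) _ assms(2)] agree_repl by auto
  qed
  also have "(\<Sum>k\<in>repl a L r ` {..<2 ^ L}. g (mid a L k) k) = (\<Sum>j<2 ^ L. g j (repl a L r j))"
  proof (subst sum.reindex)
    show "inj_on (repl a L r) {..<2 ^ L}"
      by (metis inj_onI lessThan_iff mid_repl)
  qed (auto simp: mid_repl intro!: sum.cong)
  finally show ?thesis .
qed



definition sg :: "nat \<Rightarrow> nat \<Rightarrow> nat \<Rightarrow> nat \<Rightarrow> nat \<Rightarrow> complex" where
  "sg a L c x y = (-1) ^ (pcb a c * (pcb L x + pcb L y))"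

definition phiw :: "nat \<Rightarrow> nat \<Rightarrow> nat \<Rightarrow> complex mat \<Rightarrow> complex mat" where
  "phiw a L K A = (if A \<in> carrier_mat (2 ^ L) (2 ^ L) then
     mat (2 ^ K) (2 ^ K) (\<lambda>(r, c). if agree a L r c
        then A $$ (mid a L r, mid a L c) * sg a L c (mid a L r) (mid a L c) else 0)
     else 0\<^sub>m (2 ^ K) (2 ^ K))"

lemma phiw_carrier[simp]: "phiw a L K A \<in> carrier_mat (2 ^ K) (2 ^ K)"
  by (simp add: phiw_def)

lemma phiw_dims[simp]: "dim_row (phiw a L K A) = 2 ^ K" "dim_col (phiw a L K A) = 2 ^ K"
  by (simp_all add: phiw_def)

lemma phiw_entry:
  "A \<in> carrier_mat (2 ^ L) (2 ^ L) \<Longrightarrow> r < 2 ^ K \<Longrightarrow> c < 2 ^ K \<Longrightarrow>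
   phiw a L K A $$ (r, c) = (if agree a L r c
        then A $$ (mid a L r, mid a L c) * sg a L c (mid a L r) (mid a L c) else 0)"
  by (simp add: phiw_def)

lemma sg_mult: "sg a L c x y * sg a L c y z = sg a L c x z"
  unfolding sg_def minus_one_power_iff by auto

lemma sg_same: "sg a L c x x = 1"
  unfolding sg_def minus_one_power_iff by auto

lemma sg_sym: "sg a L c x y = sg a L c y x"
  unfolding sg_def by (simp add: add.commute)

lemma sg_cnj: "cnj (sg a L c x y) = sg a L c x y"
  unfolding sg_def by simp

lemma sg_agree: "agree a L r c \<Longrightarrow> sg a L r x y = sg a L c x y"
  unfolding sg_def using agree_pcb by metis

lemma phiw_add:
  assumes "A \<in> carrier_mat (2 ^ L) (2 ^ L)" "B \<in> carrier_mat (2 ^ L) (2 ^ L)"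
  shows "phiw a L K (A + B) = phiw a L K A + phiw a L K B"
  by (rule eq_matI) (use assms mid_lt in \<open>auto simp: phiw_entry algebra_simps\<close>)

lemma phiw_smult:
  assumes "A \<in> carrier_mat (2 ^ L) (2 ^ L)"
  shows "phiw a L K (x \<cdot>\<^sub>m A) = x \<cdot>\<^sub>m phiw a L K A"
  by (rule eq_matI) (use assms mid_lt in \<open>auto simp: phiw_entry algebra_simps\<close>)

lemma phiw_one:
  "phiw a L K (1\<^sub>m (2 ^ L)) = 1\<^sub>m (2 ^ K)"
proof (rule eq_matI)
  fix r c assume rc: "r < dim_row (1\<^sub>m (2 ^ K))" "c < dim_col (1\<^sub>m (2 ^ K))"
  then show "phiw a L K (1\<^sub>m (2 ^ L)) $$ (r, c) = 1\<^sub>m (2 ^ K) $$ (r, c)"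
    using agree_mid_eq[of a L r c] agree_refl[of a L r]
    by (auto simp: phiw_entry mid_lt sg_same)
qed auto

lemma phiw_adj:
  assumes "A \<in> carrier_mat (2 ^ L) (2 ^ L)"
  shows "phiw a L K (mat_adjoint A) = mat_adjoint (phiw a L K A)"
proof (rule eq_matI)
  fix r c assume rc: "r < dim_row (mat_adjoint (phiw a L K A))" "c < dim_col (mat_adjoint (phiw a L K A))"
  then have r: "r < 2 ^ K" and c: "c < 2 ^ K" by auto
  show "phiw a L K (mat_adjoint A) $$ (r, c) = mat_adjoint (phiw a L K A) $$ (r, c)"
    using assms r c agree_sym[of a L r c] agree_sym[of a L c r] sg_agree[of a L c r] mid_lt
    by (auto simp: phiw_entry sg_sym sg_cnj)
qed auto

lemma phiw_mult:
  assumes A: "A \<in> carrier_mat (2 ^ L) (2 ^ L)" and B: "B \<in> carrier_mat (2 ^ L) (2 ^ L)"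
    and aLK: "a + L \<le> K"
  shows "phiw a L K (A * B) = phiw a L K A * phiw a L K B"
proof (rule eq_matI)
  fix r c assume rc: "r < dim_row (phiw a L K A * phiw a L K B)" "c < dim_col (phiw a L K A * phiw a L K B)"
  then have r: "r < 2 ^ K" and c: "c < 2 ^ K" by auto
  have AB: "A * B \<in> carrier_mat (2 ^ L) (2 ^ L)" using A B by auto
  let ?mr = "mid a L r" and ?mc = "mid a L c"
  have "(phiw a L K A * phiw a L K B) $$ (r, c)
      = (\<Sum>k<2 ^ K. phiw a L K A $$ (r, k) * phiw a L K B $$ (k, c))"
    by (rule mult_entry[OF phiw_carrier phiw_carrier r c])
  also have "\<dots> = (\<Sum>k<2 ^ K. if agree a L r k then
        (\<lambda>(j::nat) (k::nat). A $$ (?mr, j) * sg a L k ?mr j * phiw a L K B $$ (k, c)) (mid a L k) k else 0)"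
    by (rule sum.cong) (auto simp: phiw_entry[OF A r])
  also have "\<dots> = (\<Sum>j<2 ^ L. A $$ (?mr, j) * sg a L (repl a L r j) ?mr j * phiw a L K B $$ (repl a L r j, c))"
    by (rule sum_window[OF r aLK])
  also have "\<dots> = (if agree a L r c then
       (\<Sum>j<2 ^ L. A $$ (?mr, j) * B $$ (j, ?mc)) * sg a L c ?mr ?mc else 0)"
  proof (cases "agree a L r c")
    case True
    have "(\<Sum>j<2 ^ L. A $$ (?mr, j) * sg a L (repl a L r j) ?mr j * phiw a L K B $$ (repl a L r j, c))
        = (\<Sum>j<2 ^ L. A $$ (?mr, j) * B $$ (j, ?mc) * sg a L c ?mr ?mc)"
    proof (rule sum.cong)
      fix j :: nat assume j: "j \<in> {..<2 ^ L}"
      then have jl: "j < 2 ^ L" by simp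
      have ag: "agree a L (repl a L r j) c"
        using agree_trans[OF agree_sym[OF agree_repl[OF jl]] True] .
      have s1: "sg a L (repl a L r j) ?mr j = sg a L c ?mr j"
        using sg_agree[OF ag] .
      have "phiw a L K B $$ (repl a L r j, c) = B $$ (j, ?mc) * sg a L c j ?mc"
        using phiw_entry[OF B repl_lt[OF r jl aLK] c] ag by (simp add: mid_repl[OF jl])
      then show "A $$ (?mr, j) * sg a L (repl a L r j) ?mr j * phiw a L K B $$ (repl a L r j, c)
          = A $$ (?mr, j) * B $$ (j, ?mc) * sg a L c ?mr ?mc"
        using s1 sg_mult[of a L c ?mr j ?mc] by (simp add: algebra_simps)
    qed simp
    then show ?thesis using True by (simp add: sum_distrib_right)
  next
    case False
    have "\<And>j. j < 2 ^ L \<Longrightarrow> phiw a L K B $$ (repl a L r j, c) = 0"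
    proof -
      fix j :: nat assume jl: "j < 2 ^ L"
      have "\<not> agree a L (repl a L r j) c"
        using False agree_trans[OF agree_repl[OF jl]] by blast
      then show "phiw a L K B $$ (repl a L r j, c) = 0"
        using phiw_entry[OF B repl_lt[OF r jl aLK] c] by simp
    qed
    then show ?thesis using False by simp
  qed
  also have "\<dots> = phiw a L K (A * B) $$ (r, c)"
    using phiw_entry[OF AB r c] mult_entry[OF A B mid_lt mid_lt] by simp
  finally show "phiw a L K (A * B) $$ (r, c) = (phiw a L K A * phiw a L K B) $$ (r, c)" ..
qed auto



lemma bit_add_pow_self: "bit ((r::nat) + 2 ^ k) k \<longleftrightarrow> \<not> bit r k"
proof -
  have "(r + 2 ^ k) div 2 ^ k = r div 2 ^ k + 1" by simp
  then show ?thesis by (simp add: bit_iff_odd)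
qed

lemma add_pow_iff:
  assumes "bit (c::nat) k"
  shows "r + 2 ^ k = c \<longleftrightarrow> (\<forall>l. bit r l \<longleftrightarrow> bit c l \<and> l \<noteq> k)"
proof
  assume h: "r + 2 ^ k = c"
  then have nr: "\<not> bit r k" using assms bit_add_pow_self by blast
  then have "set_bit k r = c" using h by (simp add: set_bit_eq)
  then show "\<forall>l. bit r l \<longleftrightarrow> bit c l \<and> l \<noteq> k"
    using nr by (auto simp: bit_set_bit_iff)
next
  assume h: "\<forall>l. bit r l \<longleftrightarrow> bit c l \<and> l \<noteq> k"
  then have nr: "\<not> bit r k" by simp
  have "set_bit k r = c"
    by (rule bit_eqI) (use h assms in \<open>auto simp: bit_set_bit_iff\<close>)
  then show "r + 2 ^ k = c" using nr by (simp add: set_bit_eq)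
qed

lemma ann_entry: "r < 2 ^ M \<Longrightarrow> c < 2 ^ M \<Longrightarrow> ann M k $$ (r, c) =
   (if bit c k \<and> r + 2 ^ k = c then (-1) ^ card {l. l < k \<and> bit c l} else 0)"
  by (simp add: ann_def occ_bit)

lemma ann_carrier[simp]: "ann M k \<in> carrier_mat (2 ^ M) (2 ^ M)"
  by (simp add: ann_def)

lemma card_split:
  assumes "i < L"
  shows "card {l. l < a + i \<and> bit c l} = pcb a c + card {l. l < i \<and> bit (mid a L c) l}"
proof -
  have "{l. l < a + i \<and> bit c l} = {l. l < a \<and> bit c l} \<union> (\<lambda>l. a + l) ` {l. l < i \<and> bit (mid a L c) l}"
  proof (rule Set.set_eqI)
    fix x show "x \<in> {l. l < a + i \<and> bit c l} \<longleftrightarrow> x \<in> {l. l < a \<and> bit c l} \<union> (\<lambda>l. a + l) ` {l. l < i \<and> bit (mid a L c) l}"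
    proof (cases "x < a")
      case True then show ?thesis by (auto simp: bit_mid)
    next
      case False
      then have "x = a + (x - a)" by simp
      then show ?thesis using False assms by (auto simp: bit_mid image_iff intro!: exI[of _ "x - a"])
    qed
  qed
  moreover have "card ({l. l < a \<and> bit c l} \<union> (\<lambda>l. a + l) ` {l. l < i \<and> bit (mid a L c) l})
     = card {l. l < a \<and> bit c l} + card ((\<lambda>l. a + l) ` {l. l < i \<and> bit (mid a L c) l})"
    by (rule card_Un_disjoint) auto
  moreover have "card ((\<lambda>l. a + l) ` {l. l < i \<and> bit (mid a L c) l}) = card {l. l < i \<and> bit (mid a L c) l}"
    by (rule card_image) auto
  ultimately show ?thesis by (simp add: pcb_def)
qed

lemma pcb_step:
  assumes "i < L" "bit y i" "\<forall>l. bit x l \<longleftrightarrow> bit y l \<and> l \<noteq> i"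
  shows "pcb L y = Suc (pcb L x)"
proof -
  have "{l. l < L \<and> bit y l} = insert i {l. l < L \<and> bit x l}" using assms by auto
  moreover have "i \<notin> {l. l < L \<and> bit x l}" using assms by auto
  ultimately show ?thesis by (simp add: pcb_def)
qed

lemma phiw_ann:
  assumes aLK: "a + L \<le> K" and i: "i < L"
  shows "phiw a L K (ann L i) = ann K (a + i)"
proof (rule eq_matI)
  fix r c assume rc: "r < dim_row (ann K (a + i))" "c < dim_col (ann K (a + i))"
  then have r: "r < 2 ^ K" and c: "c < 2 ^ K" by (auto simp: ann_def)
  let ?mr = "mid a L r" and ?mc = "mid a L c"
  have bmc: "bit ?mc i \<longleftrightarrow> bit c (a + i)" using i by (simp add: bit_mid)
  have cond: "(bit c (a + i) \<and> r + 2 ^ (a + i) = c) \<longleftrightarrow>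
      (agree a L r c \<and> bit ?mc i \<and> ?mr + 2 ^ i = ?mc)"
  proof (cases "bit c (a + i)")
    case True
    then have bm: "bit ?mc i" using bmc by simp
    have "(\<forall>l. bit r l \<longleftrightarrow> bit c l \<and> l \<noteq> a + i) \<longleftrightarrow>
        (agree a L r c \<and> (\<forall>l. bit ?mr l \<longleftrightarrow> bit ?mc l \<and> l \<noteq> i))"
    proof
      assume h: "\<forall>l. bit r l \<longleftrightarrow> bit c l \<and> l \<noteq> a + i"
      show "agree a L r c \<and> (\<forall>l. bit ?mr l \<longleftrightarrow> bit ?mc l \<and> l \<noteq> i)"
        using h i by (auto simp: agree_def bit_mid)
    next
      assume h: "agree a L r c \<and> (\<forall>l. bit ?mr l \<longleftrightarrow> bit ?mc l \<and> l \<noteq> i)"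
      show "\<forall>l. bit r l \<longleftrightarrow> bit c l \<and> l \<noteq> a + i"
      proof
        fix l show "bit r l \<longleftrightarrow> bit c l \<and> l \<noteq> a + i"
        proof (cases "l < a \<or> a + L \<le> l")
          case True then show ?thesis using h i unfolding agree_def by auto
        next
          case False
          then have l: "l = a + (l - a)" "l - a < L" by arith+
          have "bit ?mr (l - a) \<longleftrightarrow> bit ?mc (l - a) \<and> l - a \<noteq> i" using h by blast
          then show ?thesis using l by (auto simp: bit_mid)
        qed
      qed
    qed
    then show ?thesis using True bm add_pow_iff[OF True, of r] add_pow_iff[OF bm, of ?mr] by simp
  next
    case False then show ?thesis using bmc by simp
  qed
  show "phiw a L K (ann L i) $$ (r, c) = ann K (a + i) $$ (r, c)"
  proof (cases "bit c (a + i) \<and> r + 2 ^ (a + i) = c")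
    case True
    then have ag: "agree a L r c" and bm: "bit ?mc i" and e: "?mr + 2 ^ i = ?mc" using cond by auto
    have bits: "\<forall>l. bit ?mr l \<longleftrightarrow> bit ?mc l \<and> l \<noteq> i" using add_pow_iff[OF bm] e by blast
    have ps: "pcb L ?mc = Suc (pcb L ?mr)" by (rule pcb_step[OF i bm bits])
    have "sg a L c ?mr ?mc = (-1) ^ pcb a c"
      unfolding sg_def ps minus_one_power_iff by auto
    then show ?thesis
      using True ag bm e phiw_entry[OF ann_carrier r c] ann_entry[OF r c] ann_entry[OF mid_lt mid_lt]
        card_split[OF i, of a c]
      by (simp add: power_add)
  next
    case False
    then show ?thesis using cond phiw_entry[OF ann_carrier r c] ann_entry[OF r c] ann_entry[OF mid_lt mid_lt]
      by auto
  qed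
qed (auto simp: ann_def)



definition Emat :: "nat \<Rightarrow> nat \<Rightarrow> nat \<Rightarrow> complex mat" where
  "Emat n r c = mat n n (\<lambda>(i, j). if i = r \<and> j = c then 1 else 0)"

definition Dg :: "nat \<Rightarrow> nat \<Rightarrow> complex mat" where
  "Dg n m = mat n n (\<lambda>(r, c). if r = c \<and> (\<forall>l<m. \<not> bit r l) then 1 else 0)"

lemma ann_dims[simp]: "dim_row (ann M k) = 2 ^ M" "dim_col (ann M k) = 2 ^ M"
  by (simp_all add: ann_def)

lemma sign_sq: "((-1::complex) ^ k) * ((-1) ^ k) = 1"
  by (simp add: power_mult_distrib[symmetric])

lemma set_bit_lt: "(r::nat) < 2 ^ L \<Longrightarrow> m < L \<Longrightarrow> \<not> bit r m \<Longrightarrow> r + 2 ^ m < 2 ^ L"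
proof -
  assume h: "r < 2 ^ L" "m < L" "\<not> bit r m"
  have "set_bit m r = r + 2 ^ m" using h(3) by (simp add: set_bit_eq)
  moreover have "set_bit m r < 2 ^ L"
    using h(1,2) unfolding lt_pow_bit by (auto simp: bit_set_bit_iff)
  ultimately show ?thesis by simp
qed

lemma P_entry:
  assumes m: "m < L" and r: "r < 2 ^ L" and c: "c < 2 ^ L"
  shows "(ann L m * mat_adjoint (ann L m)) $$ (r, c) = (if r = c \<and> \<not> bit r m then 1 else 0)"
proof -
  have "(ann L m * mat_adjoint (ann L m)) $$ (r, c)
     = (\<Sum>k<2 ^ L. ann L m $$ (r, k) * cnj (ann L m $$ (c, k)))"
  proof -
    have "(ann L m * mat_adjoint (ann L m)) $$ (r, c) = (\<Sum>k<2 ^ L. ann L m $$ (r, k) * mat_adjoint (ann L m) $$ (k, c))"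
      by (rule mult_entry[OF ann_carrier adj_carrier[OF ann_carrier] r c])
    also have "\<dots> = (\<Sum>k<2 ^ L. ann L m $$ (r, k) * cnj (ann L m $$ (c, k)))"
      by (rule sum.cong) (use c in \<open>auto simp: ann_dims\<close>)
    finally show ?thesis .
  qed
  also have "\<dots> = (\<Sum>k<2 ^ L. if k = r + 2 ^ m then
       (if bit k m then (-1) ^ card {l. l < m \<and> bit k l} else 0) * cnj (ann L m $$ (c, k)) else 0)"
    by (rule sum.cong) (auto simp: ann_entry r)
  also have "\<dots> = (if r + 2 ^ m < 2 ^ L then
       (if bit (r + 2 ^ m) m then (-1) ^ card {l. l < m \<and> bit (r + 2 ^ m) l} else 0)
         * cnj (ann L m $$ (c, r + 2 ^ m)) else 0)"
    by (simp add: sum.delta)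
  also have "\<dots> = (if r = c \<and> \<not> bit r m then 1 else 0)"
  proof (cases "bit r m")
    case True then show ?thesis using bit_add_pow_self[of r m] by auto
  next
    case False
    then have lt: "r + 2 ^ m < 2 ^ L" using set_bit_lt r m by blast
    have b: "bit (r + 2 ^ m) m" using False bit_add_pow_self by blast
    show ?thesis using lt b False ann_entry[OF c lt] sign_sq by auto
  qed
  finally show ?thesis .
qed

lemma diag_left:
  assumes A: "A \<in> carrier_mat n n" and r: "r < n" and c: "c < n"
  shows "(mat n n (\<lambda>(i, k). if i = k then d i else 0) * A) $$ (r, c) = d r * A $$ (r, c)"
proof -
  have "(mat n n (\<lambda>(i, k). if i = k then d i else 0) * A) $$ (r, c)
      = (\<Sum>k<n. (if r = k then d r else 0) * A $$ (k, c))"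
    using mult_entry[OF _ A r c, of "mat n n (\<lambda>(i, k). if i = k then d i else 0)"] r
    by (auto intro!: sum.cong)
  also have "\<dots> = (\<Sum>k<n. if k = r then d r * A $$ (k, c) else 0)"
    by (rule sum.cong) auto
  also have "\<dots> = d r * A $$ (r, c)" using r by (simp add: sum.delta)
  finally show ?thesis .
qed

lemma Dg_Suc:
  assumes m: "m < L"
  shows "Dg (2 ^ L) (Suc m) = Dg (2 ^ L) m * (ann L m * mat_adjoint (ann L m))"
proof (rule eq_matI)
  fix r c assume "r < dim_row (Dg (2 ^ L) m * (ann L m * mat_adjoint (ann L m)))"
    "c < dim_col (Dg (2 ^ L) m * (ann L m * mat_adjoint (ann L m)))"
  then have r: "r < 2 ^ L" and c: "c < 2 ^ L" by (auto simp: Dg_def ann_def)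
  have D: "Dg (2 ^ L) m = mat (2 ^ L) (2 ^ L) (\<lambda>(i, k). if i = k then (if (\<forall>l<m. \<not> bit i l) then 1 else 0) else 0)"
    unfolding Dg_def by (rule cong[OF refl]) auto
  have P: "ann L m * mat_adjoint (ann L m) \<in> carrier_mat (2 ^ L) (2 ^ L)"
    using ann_carrier adj_carrier by (metis mult_carrier_mat)
  show "Dg (2 ^ L) (Suc m) $$ (r, c) = (Dg (2 ^ L) m * (ann L m * mat_adjoint (ann L m))) $$ (r, c)"
    unfolding D diag_left[OF P r c] P_entry[OF m r c]
    using r c by (auto simp: Dg_def less_Suc_eq)
qed (auto simp: Dg_def ann_def)

lemma Dg_0: "Dg n 0 = 1\<^sub>m n"
  by (rule eq_matI) (auto simp: Dg_def)

lemma Dg_L: "Dg (2 ^ L) L = Emat (2 ^ L) 0 0"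
proof (rule eq_matI)
  fix r c assume "r < dim_row (Emat (2 ^ L) 0 0)" "c < dim_col (Emat (2 ^ L) 0 0)"
  then have r: "r < 2 ^ L" and c: "c < 2 ^ L" by (auto simp: Emat_def)
  have "(\<forall>l<L. \<not> bit r l) \<longleftrightarrow> r = 0"
  proof
    assume h: "\<forall>l<L. \<not> bit r l"
    show "r = 0" by (rule bit_eqI) (use h r lt_pow_bit in auto)
  qed simp
  then show "Dg (2 ^ L) L $$ (r, c) = Emat (2 ^ L) 0 0 $$ (r, c)"
    using r c by (auto simp: Dg_def Emat_def)
qed (auto simp: Dg_def Emat_def)

lemma E0_step:
  assumes k: "bit c k" and c: "c < 2 ^ L"
  shows "Emat (2 ^ L) 0 (unset_bit k c) * ann L k = ((-1) ^ card {l. l < k \<and> bit c l}) \<cdot>\<^sub>m Emat (2 ^ L) 0 c"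
proof (rule eq_matI)
  fix i j assume "i < dim_row (((-1) ^ card {l. l < k \<and> bit c l}) \<cdot>\<^sub>m Emat (2 ^ L) 0 c)"
    "j < dim_col (((-1) ^ card {l. l < k \<and> bit c l}) \<cdot>\<^sub>m Emat (2 ^ L) 0 c)"
  then have i: "i < 2 ^ L" and j: "j < 2 ^ L" by (auto simp: Emat_def)
  let ?c' = "unset_bit k c"
  have c'c: "?c' + 2 ^ k = c"
  proof -
    have "\<not> bit ?c' k" by (simp add: bit_unset_bit_iff)
    then have "set_bit k ?c' = ?c' + 2 ^ k" by (simp add: set_bit_eq)
    moreover have "set_bit k ?c' = c"
      by (rule bit_eqI) (use k in \<open>auto simp: bit_set_bit_iff bit_unset_bit_iff\<close>)
    ultimately show ?thesis by simp
  qed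
  have c'l: "?c' < 2 ^ L" using c'c c by linarith
  have "(Emat (2 ^ L) 0 ?c' * ann L k) $$ (i, j) = (\<Sum>l<2 ^ L. Emat (2 ^ L) 0 ?c' $$ (i, l) * ann L k $$ (l, j))"
    by (rule mult_entry[OF _ ann_carrier i j]) (simp add: Emat_def)
  also have "\<dots> = (\<Sum>l<2 ^ L. if l = ?c' then (if i = 0 then 1 else 0) * ann L k $$ (l, j) else 0)"
    by (rule sum.cong) (auto simp: Emat_def i)
  also have "\<dots> = (if i = 0 then 1 else 0) * ann L k $$ (?c', j)"
    using c'l by (simp add: sum.delta)
  also have "\<dots> = (((-1) ^ card {l. l < k \<and> bit c l}) \<cdot>\<^sub>m Emat (2 ^ L) 0 c) $$ (i, j)"
    using ann_entry[OF c'l j, of k] c'c k i j by (auto simp: Emat_def)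
  finally show "(Emat (2 ^ L) 0 ?c' * ann L k) $$ (i, j) = (((-1) ^ card {l. l < k \<and> bit c l}) \<cdot>\<^sub>m Emat (2 ^ L) 0 c) $$ (i, j)" .
qed (auto simp: Emat_def ann_def)

lemma Emat_adj_mult:
  assumes r: "r < n" and c: "c < n"
  shows "mat_adjoint (Emat n 0 r) * Emat n 0 c = Emat n r c"
proof (rule eq_matI)
  fix i j assume "i < dim_row (Emat n r c)" "j < dim_col (Emat n r c)"
  then have i: "i < n" and j: "j < n" by (auto simp: Emat_def)
  have E: "Emat n 0 r \<in> carrier_mat n n" "Emat n 0 c \<in> carrier_mat n n" by (auto simp: Emat_def)
  have "(mat_adjoint (Emat n 0 r) * Emat n 0 c) $$ (i, j) = (\<Sum>l<n. cnj (Emat n 0 r $$ (l, i)) * Emat n 0 c $$ (l, j))"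
    using mult_entry[OF adj_carrier[OF E(1)] E(2) i j] i E(1) by auto
  also have "\<dots> = (\<Sum>l<n. if l = 0 then (if i = r \<and> j = c then 1 else 0) else 0)"
    by (rule sum.cong) (auto simp: Emat_def i j)
  also have "\<dots> = Emat n r c $$ (i, j)" using i j by (simp add: sum.delta Emat_def)
  finally show "(mat_adjoint (Emat n 0 r) * Emat n 0 c) $$ (i, j) = Emat n r c $$ (i, j)" .
qed (auto simp: Emat_def)



lemma unset_add: "bit (c::nat) k \<Longrightarrow> unset_bit k c + 2 ^ k = c"
proof -
  assume k: "bit c k"
  have "\<not> bit (unset_bit k c) k" by (simp add: bit_unset_bit_iff)
  then have "set_bit k (unset_bit k c) = unset_bit k c + 2 ^ k" by (simp add: set_bit_eq)
  moreover have "set_bit k (unset_bit k c) = c"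
    by (rule bit_eqI) (use k in \<open>auto simp: bit_set_bit_iff bit_unset_bit_iff\<close>)
  ultimately show ?thesis by simp
qed

lemma smult_smult_mat: "(x::complex) \<cdot>\<^sub>m (y \<cdot>\<^sub>m A) = (x * y) \<cdot>\<^sub>m A"
  by (rule eq_matI) auto

lemma one_smult_mat': "(1::complex) \<cdot>\<^sub>m A = A"
  by (rule eq_matI) auto

lemma index_decomp: assumes "(j::nat) < n" shows "(i * n + j = k) \<longleftrightarrow> (i = k div n \<and> j = k mod n)"
proof
  assume "i * n + j = k" then show "i = k div n \<and> j = k mod n" using assms by auto
next
  assume "i = k div n \<and> j = k mod n" then show "i * n + j = k" by simp
qed

lemma hom_unique:
  assumes phi: "unital_star_hom (2 ^ L) m \<phi>" and psi: "unital_star_hom (2 ^ L) m \<psi>"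
    and gen: "\<forall>i<L. \<phi> (ann L i) = \<psi> (ann L i)"
    and A: "A \<in> carrier_mat (2 ^ L) (2 ^ L)"
  shows "\<phi> A = \<psi> A"
proof -
  define n where "n = (2::nat) ^ L"
  define S where "S = {A \<in> carrier_mat n n. \<phi> A = \<psi> A}"
  have add: "X + Y \<in> S" if "X \<in> S" "Y \<in> S" for X Y
    using that phi psi unfolding S_def unital_star_hom_def n_def by auto
  have mul: "X * Y \<in> S" if "X \<in> S" "Y \<in> S" for X Y
    using that phi psi unfolding S_def unital_star_hom_def n_def by auto
  have smul: "x \<cdot>\<^sub>m X \<in> S" if "X \<in> S" for X x
    using that phi psi unfolding S_def unital_star_hom_def n_def by auto
  have adj: "mat_adjoint X \<in> S" if "X \<in> S" for X
    using that phi psi unfolding S_def unital_star_hom_def n_def by auto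
  have one: "1\<^sub>m n \<in> S"
    using phi psi unfolding S_def unital_star_hom_def n_def by auto
  have annS: "ann L i \<in> S" if "i < L" for i
    using that gen ann_carrier unfolding S_def n_def by auto
  have DgS: "Dg n k \<in> S" if "k \<le> L" for k
    using that
  proof (induction k)
    case 0 then show ?case using one by (simp add: Dg_0)
  next
    case (Suc k)
    then have "k < L" by simp
    then show ?case unfolding n_def Dg_Suc[OF \<open>k < L\<close>]
      using mul Suc annS adj by (auto simp: n_def)
  qed
  have E00: "Emat n 0 0 \<in> S" using DgS[of L] by (simp add: n_def Dg_L)
  have E0: "Emat n 0 c \<in> S" if "c < n" for c
    using that
  proof (induction c rule: less_induct)
    case (less c)
    show ?case
    proof (cases "c = 0")
      case True then show ?thesis using E00 by simp
    next
      case False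
      have "\<exists>k. bit c k"
      proof (rule ccontr)
        assume "\<not> (\<exists>k. bit c k)"
        then have "c = 0" by (intro bit_eqI) auto
        then show False using False by simp
      qed
      then obtain k where k: "bit c k" by blast
      have kL: "k < L" using bit_small[of c L k] less.prems k by (simp add: n_def)
      have ua: "unset_bit k c + 2 ^ k = c" using unset_add[OF k] .
      have "0 < (2::nat) ^ k" by simp
      then have lt: "unset_bit k c < c" using ua by linarith
      then have IH: "Emat n 0 (unset_bit k c) \<in> S" using less.IH less.prems by simp
      let ?s = "(-1::complex) ^ card {l. l < k \<and> bit c l}"
      have "Emat n 0 (unset_bit k c) * ann L k = ?s \<cdot>\<^sub>m Emat n 0 c"
        using E0_step[OF k, of L] less.prems by (simp add: n_def)
      then have "?s \<cdot>\<^sub>m (Emat n 0 (unset_bit k c) * ann L k) = Emat n 0 c"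
        by (simp add: smult_smult_mat sign_sq one_smult_mat')
      moreover have "?s \<cdot>\<^sub>m (Emat n 0 (unset_bit k c) * ann L k) \<in> S"
        using smul mul IH annS kL by blast
      ultimately show ?thesis by simp
    qed
  qed
  have Ers: "Emat n r c \<in> S" if "r < n" "c < n" for r c
  proof -
    have "mat_adjoint (Emat n 0 r) * Emat n 0 c \<in> S" using mul adj E0 that by blast
    then show ?thesis using Emat_adj_mult[OF that] by simp
  qed
  define P where "P k = mat n n (\<lambda>(i, j). if i * n + j < k then A $$ (i, j) else 0)" for k
  have zero: "0\<^sub>m n n \<in> S"
  proof -
    have "(0::complex) \<cdot>\<^sub>m 1\<^sub>m n = 0\<^sub>m n n" by (rule eq_matI) auto
    then show ?thesis using smul[OF one, of 0] by simp
  qed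
  have PS: "P k \<in> S" if "k \<le> n * n" for k
    using that
  proof (induction k)
    case 0
    have "P 0 = 0\<^sub>m n n" unfolding P_def by (rule eq_matI) auto
    then show ?case using zero by simp
  next
    case (Suc k)
    then have kn: "k < n * n" by simp
    have n0: "0 < n" using kn by (cases n) auto
    have dn: "k div n < n" using kn by (simp add: less_mult_imp_div_less)
    have mn: "k mod n < n" using n0 by simp
    have "P (Suc k) = P k + A $$ (k div n, k mod n) \<cdot>\<^sub>m Emat n (k div n) (k mod n)"
    proof (rule eq_matI)
      fix i j assume "i < dim_row (P k + A $$ (k div n, k mod n) \<cdot>\<^sub>m Emat n (k div n) (k mod n))"
        "j < dim_col (P k + A $$ (k div n, k mod n) \<cdot>\<^sub>m Emat n (k div n) (k mod n))"
      then have i: "i < n" and j: "j < n" by (auto simp: Emat_def)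
      show "P (Suc k) $$ (i, j) = (P k + A $$ (k div n, k mod n) \<cdot>\<^sub>m Emat n (k div n) (k mod n)) $$ (i, j)"
        using i j index_decomp[OF j, of i k] by (auto simp: P_def Emat_def)
    qed (auto simp: P_def Emat_def)
    then show ?case using add smul Ers dn mn Suc by auto
  qed
  have "P (n * n) = A"
  proof (rule eq_matI)
    fix i j assume "i < dim_row A" "j < dim_col A"
    then have i: "i < n" and j: "j < n" using A by (auto simp: n_def)
    have "i * n + j < i * n + n" using j by simp
    also have "\<dots> = (i + 1) * n" by simp
    also have "\<dots> \<le> n * n" using i by (intro mult_le_mono1) simp
    finally show "P (n * n) $$ (i, j) = A $$ (i, j)" using i j by (simp add: P_def)
  qed (use A in \<open>auto simp: P_def n_def\<close>)
  then show ?thesis using PS[of "n * n"] unfolding S_def by auto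
qed



lemma phiw_hom: "a + L \<le> K \<Longrightarrow> unital_star_hom (2 ^ L) (2 ^ K) (phiw a L K)"
  unfolding unital_star_hom_def
  by (simp add: phiw_add phiw_mult phiw_smult phiw_adj phiw_one)

lemma slice_eq:
  assumes t: "t < N"
  shows "slice L N t = phiw (t * L) L (N * L)"
proof -
  have tl: "t * L + L \<le> N * L"
  proof -
    have "t * L + L = Suc t * L" by simp
    also have "\<dots> \<le> N * L" using t by (intro mult_le_mono1) simp
    finally show ?thesis .
  qed
  let ?P = "\<lambda>\<phi>. unital_star_hom (2 ^ L) (2 ^ (N * L)) \<phi> \<and>
      (\<forall>i < L. \<phi> (ann L i) = ann (N * L) (t * L + i)) \<and>
      (\<forall>A. A \<notin> carrier_mat (2 ^ L) (2 ^ L) \<longrightarrow> \<phi> A = 0\<^sub>m (2 ^ (N * L)) (2 ^ (N * L)))"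
  have P: "?P (phiw (t * L) L (N * L))"
    using phiw_hom[OF tl] phiw_ann[OF tl] by (auto simp: phiw_def)
  have U: "\<psi> = phiw (t * L) L (N * L)" if "?P \<psi>" for \<psi>
  proof
    fix A show "\<psi> A = phiw (t * L) L (N * L) A"
    proof (cases "A \<in> carrier_mat (2 ^ L) (2 ^ L)")
      case True
      show ?thesis
        by (rule hom_unique[OF _ phiw_hom[OF tl] _ True]) (use that phiw_ann[OF tl] in auto)
    next
      case False then show ?thesis using that by (simp add: phiw_def)
    qed
  qed
  show ?thesis unfolding slice_def by (rule the_equality) (rule P, erule U)
qed

definition gr :: "nat \<Rightarrow> bool \<Rightarrow> complex mat \<Rightarrow> bool" where
  "gr M b A \<longleftrightarrow> (\<forall>r c. r < 2 ^ M \<longrightarrow> c < 2 ^ M \<longrightarrow> odd (pcb M r + pcb M c) \<noteq> b \<longrightarrow> A $$ (r, c) = 0)"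

lemma gr_mult:
  assumes "A \<in> carrier_mat (2 ^ M) (2 ^ M)" "B \<in> carrier_mat (2 ^ M) (2 ^ M)" "gr M b A" "gr M b' B"
  shows "gr M (b \<noteq> b') (A * B)"
  unfolding gr_def
proof (intro allI impI)
  fix r c assume r: "r < 2 ^ M" and c: "c < 2 ^ M" and p: "odd (pcb M r + pcb M c) \<noteq> (b \<noteq> b')"
  have "(A * B) $$ (r, c) = (\<Sum>k<2 ^ M. A $$ (r, k) * B $$ (k, c))" by (rule mult_entry[OF assms(1,2) r c])
  also have "\<dots> = 0"
  proof (rule sum.neutral, intro ballI)
    fix k :: nat assume "k \<in> {..<2 ^ M}"
    then have k: "k < 2 ^ M" by simp
    show "A $$ (r, k) * B $$ (k, c) = 0"
    proof (cases "odd (pcb M r + pcb M k) = b")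
      case True
      then have "odd (pcb M k + pcb M c) \<noteq> b'" using p by auto
      then show ?thesis using assms(4) k c unfolding gr_def by auto
    next
      case False then show ?thesis using assms(3) k r unfolding gr_def by auto
    qed
  qed
  finally show "(A * B) $$ (r, c) = 0" .
qed

lemma gr_add: "B \<in> carrier_mat (2 ^ M) (2 ^ M) \<Longrightarrow> gr M b A \<Longrightarrow> gr M b B \<Longrightarrow> gr M b (A + B)"
  unfolding gr_def by auto

lemma gr_smult: "A \<in> carrier_mat (2 ^ M) (2 ^ M) \<Longrightarrow> gr M b A \<Longrightarrow> gr M b (x \<cdot>\<^sub>m A)"
  unfolding gr_def by auto

lemma gr_zero: "gr M b (0\<^sub>m (2 ^ M) (2 ^ M))"
  unfolding gr_def by auto

lemma gr_one: "gr M False (1\<^sub>m (2 ^ M))"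
  unfolding gr_def by auto

lemma gr_adj: "A \<in> carrier_mat (2 ^ M) (2 ^ M) \<Longrightarrow> gr M b A \<Longrightarrow> gr M b (mat_adjoint A)"
  unfolding gr_def by (auto simp: add.commute)

lemma gr_ann: "gr M True (ann M k)"
  unfolding gr_def
proof (intro allI impI)
  fix r c assume r: "r < 2 ^ M" and c: "c < 2 ^ M" and p: "odd (pcb M r + pcb M c) \<noteq> True"
  show "ann M k $$ (r, c) = 0"
  proof (rule ccontr)
    assume "ann M k $$ (r, c) \<noteq> 0"
    then have h: "bit c k" "r + 2 ^ k = c" using ann_entry[OF r c] by (auto split: if_splits)
    have kM: "k < M" using h(1) c bit_small by blast
    have "pcb M c = Suc (pcb M r)" by (rule pcb_step[OF kM h(1)]) (use add_pow_iff[OF h(1)] h(2) in blast)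
    then show False using p by simp
  qed
qed

lemma gr_mprod:
  assumes "set w \<subseteq> ladder_ops M"
  shows "mprod (2 ^ M) w \<in> carrier_mat (2 ^ M) (2 ^ M) \<and> gr M (odd (length w)) (mprod (2 ^ M) w)"
  using assms
proof (induction w)
  case Nil then show ?case by (simp add: mprod_def gr_one)
next
  case (Cons x w)
  then have x: "x \<in> carrier_mat (2 ^ M) (2 ^ M)" "gr M True x"
    using gr_ann gr_adj[OF ann_carrier] by (auto simp: ladder_ops_def)
  have IH: "mprod (2 ^ M) w \<in> carrier_mat (2 ^ M) (2 ^ M)" "gr M (odd (length w)) (mprod (2 ^ M) w)"
    using Cons by auto
  have e: "mprod (2 ^ M) (x # w) = x * mprod (2 ^ M) w" by (simp add: mprod_def)
  show ?case unfolding e using gr_mult[OF x(1) IH(1) x(2) IH(2)] x(1) IH(1) by auto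
qed

lemma gr_pp:
  assumes "parity_preserving M H"
  shows "gr M False H"
proof -
  obtain ws :: "(complex \<times> complex mat list) list" where
    ws: "\<forall>(c, w) \<in> set ws. even (length w) \<and> set w \<subseteq> ladder_ops M"
    and H: "H = foldr (\<lambda>(c, w) S. c \<cdot>\<^sub>m mprod (2 ^ M) w + S) ws (0\<^sub>m (2 ^ M) (2 ^ M))"
    using assms unfolding parity_preserving_def by blast
  have "foldr (\<lambda>(c, w) S. c \<cdot>\<^sub>m mprod (2 ^ M) w + S) ws (0\<^sub>m (2 ^ M) (2 ^ M)) \<in> carrier_mat (2 ^ M) (2 ^ M)
     \<and> gr M False (foldr (\<lambda>(c, w) S. c \<cdot>\<^sub>m mprod (2 ^ M) w + S) ws (0\<^sub>m (2 ^ M) (2 ^ M)))"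
    using ws
  proof (induction ws)
    case Nil then show ?case by (simp add: gr_zero)
  next
    case (Cons p ws)
    obtain c w where p: "p = (c, w)" by (cases p)
    have w: "even (length w)" "set w \<subseteq> ladder_ops M" using Cons.prems p by auto
    have IH: "foldr (\<lambda>(c, w) S. c \<cdot>\<^sub>m mprod (2 ^ M) w + S) ws (0\<^sub>m (2 ^ M) (2 ^ M)) \<in> carrier_mat (2 ^ M) (2 ^ M)"
      "gr M False (foldr (\<lambda>(c, w) S. c \<cdot>\<^sub>m mprod (2 ^ M) w + S) ws (0\<^sub>m (2 ^ M) (2 ^ M)))"
      using Cons by auto
    have m: "mprod (2 ^ M) w \<in> carrier_mat (2 ^ M) (2 ^ M)" "gr M False (mprod (2 ^ M) w)"
      using gr_mprod[OF w(2)] w(1) by auto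
    show ?case unfolding p using IH m gr_add[OF IH(1) gr_smult[OF m] IH(2)] by auto
  qed
  then show ?thesis using H by simp
qed



lemma phiw_even_entry:
  assumes X: "X \<in> carrier_mat (2 ^ L) (2 ^ L)" and g: "gr L False X" and r: "r < 2 ^ K" and c: "c < 2 ^ K"
  shows "phiw a L K X $$ (r, c) = (if agree a L r c then X $$ (mid a L r, mid a L c) else 0)"
proof -
  have "X $$ (mid a L r, mid a L c) * sg a L c (mid a L r) (mid a L c) = X $$ (mid a L r, mid a L c)"
  proof (cases "X $$ (mid a L r, mid a L c) = 0")
    case False
    then have "even (pcb L (mid a L r) + pcb L (mid a L c))" using g mid_lt unfolding gr_def by blast
    then have "sg a L c (mid a L r) (mid a L c) = 1" unfolding sg_def minus_one_power_iff by auto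
    then show ?thesis by simp
  qed simp
  then show ?thesis using phiw_entry[OF X r c] by simp
qed

definition agree2 :: "nat \<Rightarrow> nat \<Rightarrow> nat \<Rightarrow> nat \<Rightarrow> nat \<Rightarrow> bool" where
  "agree2 a b L r c \<longleftrightarrow> (\<forall>l. (l < a \<or> a + L \<le> l) \<and> (l < b \<or> b + L \<le> l) \<longrightarrow> bit r l = bit c l)"

lemma agree2_sym: "agree2 a b L r c = agree2 b a L r c"
  unfolding agree2_def by blast

lemma mid_repl_other:
  assumes d: "a + L \<le> b \<or> b + L \<le> a" and j: "j < 2 ^ L"
  shows "mid b L (repl a L r j) = mid b L r"
proof (rule bit_eqI)
  fix l show "bit (mid b L (repl a L r j)) l = bit (mid b L r) l"
    using d by (auto simp: bit_mid bit_repl[OF j])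
qed

lemma agree_repl_other:
  assumes d: "a + L \<le> b \<or> b + L \<le> a" and j: "j < 2 ^ L"
  shows "agree b L (repl a L r j) c \<longleftrightarrow> (j = mid a L c \<and> agree2 a b L r c)"
proof
  assume h: "agree b L (repl a L r j) c"
  have "j = mid a L c"
  proof (rule bit_eqI)
    fix l show "bit j l = bit (mid a L c) l"
    proof (cases "l < L")
      case True
      have "bit (repl a L r j) (a + l) = bit c (a + l)"
        using h d True unfolding agree_def by auto
      then show ?thesis using True by (simp add: bit_repl[OF j] bit_mid)
    next
      case False then show ?thesis using bit_small[OF j] by (auto simp: bit_mid)
    qed
  qed
  moreover have "agree2 a b L r c"
    unfolding agree2_def
  proof (intro allI impI)
    fix l assume l: "(l < a \<or> a + L \<le> l) \<and> (l < b \<or> b + L \<le> l)"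
    then have "bit (repl a L r j) l = bit c l" using h unfolding agree_def by auto
    then show "bit r l = bit c l" using l by (auto simp: bit_repl[OF j] split: if_splits)
  qed
  ultimately show "j = mid a L c \<and> agree2 a b L r c" ..
next
  assume h: "j = mid a L c \<and> agree2 a b L r c"
  show "agree b L (repl a L r j) c"
    unfolding agree_def
  proof (intro allI impI)
    fix l assume l: "l < b \<or> b + L \<le> l"
    show "bit (repl a L r j) l = bit c l"
    proof (cases "a \<le> l \<and> l < a + L")
      case True
      then have e: "a + (l - a) = l" and lt: "l - a < L" by arith+
      have "bit (repl a L r j) l = bit j (l - a)" using True by (simp add: bit_repl[OF j])
      also have "\<dots> = bit c l" using h e lt by (simp add: bit_mid)
      finally show ?thesis .
    next
      case False
      then have "bit (repl a L r j) l = bit r l" by (auto simp: bit_repl[OF j])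
      moreover have "bit r l = bit c l" using h l False unfolding agree2_def by auto
      ultimately show ?thesis by simp
    qed
  qed
qed

lemma card_splitL:
  shows "card {l. l < a + L \<and> bit c l} = pcb a c + pcb L (mid a L c)"
proof -
  have "{l. l < a + L \<and> bit c l} = {l. l < a \<and> bit c l} \<union> (\<lambda>l. a + l) ` {l. l < L \<and> bit (mid a L c) l}"
  proof (rule Set.set_eqI)
    fix x show "x \<in> {l. l < a + L \<and> bit c l} \<longleftrightarrow> x \<in> {l. l < a \<and> bit c l} \<union> (\<lambda>l. a + l) ` {l. l < L \<and> bit (mid a L c) l}"
    proof (cases "x < a")
      case True then show ?thesis by (auto simp: bit_mid)
    next
      case False
      then have "x = a + (x - a)" by simp
      then show ?thesis using False by (auto simp: bit_mid image_iff intro!: exI[of _ "x - a"])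
    qed
  qed
  moreover have "card ({l. l < a \<and> bit c l} \<union> (\<lambda>l. a + l) ` {l. l < L \<and> bit (mid a L c) l})
     = card {l. l < a \<and> bit c l} + card ((\<lambda>l. a + l) ` {l. l < L \<and> bit (mid a L c) l})"
    by (rule card_Un_disjoint) auto
  moreover have "card ((\<lambda>l. a + l) ` {l. l < L \<and> bit (mid a L c) l}) = card {l. l < L \<and> bit (mid a L c) l}"
    by (rule card_image) auto
  ultimately show ?thesis by (simp add: pcb_def)
qed

lemma pcb_parity:
  assumes ab: "a + L \<le> b" and ag: "agree2 a b L r c"
    and ev: "even (pcb L (mid a L r) + pcb L (mid a L c))"
  shows "even (pcb b r) = even (pcb b c)"
proof -
  have split: "pcb b x = card {l. l < a + L \<and> bit x l} + card {l. a + L \<le> l \<and> l < b \<and> bit x l}" for x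
  proof -
    have "{l. l < b \<and> bit x l} = {l. l < a + L \<and> bit x l} \<union> {l. a + L \<le> l \<and> l < b \<and> bit x l}"
      using ab by auto
    moreover have "card ({l. l < a + L \<and> bit x l} \<union> {l. a + L \<le> l \<and> l < b \<and> bit x l})
      = card {l. l < a + L \<and> bit x l} + card {l. a + L \<le> l \<and> l < b \<and> bit x l}"
      by (rule card_Un_disjoint) auto
    ultimately show ?thesis unfolding pcb_def by simp
  qed
  have low: "pcb a r = pcb a c" unfolding pcb_def
    by (rule arg_cong[where f=card]) (use ag ab in \<open>auto simp: agree2_def\<close>)
  have high: "{l. a + L \<le> l \<and> l < b \<and> bit r l} = {l. a + L \<le> l \<and> l < b \<and> bit c l}"
    using ag unfolding agree2_def by auto
  show ?thesis using split[of r] split[of c] card_splitL[of a L r] card_splitL[of a L c] low high ev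
    by auto
qed

lemma sg_par: "even (pcb b r) = even (pcb b c) \<Longrightarrow> sg b L r x y = sg b L c x y"
  unfolding sg_def minus_one_power_iff by auto

lemma sum_single: "(m::nat) < n \<Longrightarrow> (\<Sum>j<n. if j = m then f j else 0) = f m"
  by (simp add: sum.delta)

lemma phiw_comm:
  assumes d: "a + L \<le> b \<or> b + L \<le> a" and aK: "a + L \<le> K" and bK: "b + L \<le> K"
    and X: "X \<in> carrier_mat (2 ^ L) (2 ^ L)" and Y: "Y \<in> carrier_mat (2 ^ L) (2 ^ L)"
    and g: "gr L False X"
  shows "phiw a L K X * phiw b L K Y = phiw b L K Y * phiw a L K X"
proof (rule eq_matI)
  fix r c assume "r < dim_row (phiw b L K Y * phiw a L K X)" "c < dim_col (phiw b L K Y * phiw a L K X)"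
  then have r: "r < 2 ^ K" and c: "c < 2 ^ K" by auto
  have d': "b + L \<le> a \<or> a + L \<le> b" using d by auto
  let ?ma = "\<lambda>x. mid a L x" and ?mb = "\<lambda>x. mid b L x"
  define V where "V = (if agree2 a b L r c then X $$ (?ma r, ?ma c) * Y $$ (?mb r, ?mb c) * sg b L c (?mb r) (?mb c) else 0)"
  have "(phiw a L K X * phiw b L K Y) $$ (r, c) = (\<Sum>k<2 ^ K. phiw a L K X $$ (r, k) * phiw b L K Y $$ (k, c))"
    by (rule mult_entry[OF phiw_carrier phiw_carrier r c])
  also have "\<dots> = (\<Sum>k<2 ^ K. if agree a L r k then
        (\<lambda>(j::nat) (k::nat). X $$ (?ma r, j) * phiw b L K Y $$ (k, c)) (mid a L k) k else 0)"
    by (rule sum.cong) (auto simp: phiw_even_entry[OF X g r])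
  also have "\<dots> = (\<Sum>j<2 ^ L. X $$ (?ma r, j) * phiw b L K Y $$ (repl a L r j, c))"
    by (rule sum_window[OF r aK])
  also have "\<dots> = (\<Sum>j<2 ^ L. if j = ?ma c then
       (if agree2 a b L r c then X $$ (?ma r, j) * Y $$ (?mb r, ?mb c) * sg b L c (?mb r) (?mb c) else 0) else 0)"
  proof (rule sum.cong)
    fix j :: nat assume "j \<in> {..<2 ^ L}"
    then have j: "j < 2 ^ L" by simp
    show "X $$ (?ma r, j) * phiw b L K Y $$ (repl a L r j, c) = (if j = ?ma c then
       (if agree2 a b L r c then X $$ (?ma r, j) * Y $$ (?mb r, ?mb c) * sg b L c (?mb r) (?mb c) else 0) else 0)"
      using phiw_entry[OF Y repl_lt[OF r j aK] c] agree_repl_other[OF d j] mid_repl_other[OF d j]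
      by auto
  qed simp
  also have "\<dots> = V" unfolding V_def by (rule sum_single[OF mid_lt])
  finally have LHS: "(phiw a L K X * phiw b L K Y) $$ (r, c) = V" .
  have "(phiw b L K Y * phiw a L K X) $$ (r, c) = (\<Sum>k<2 ^ K. phiw b L K Y $$ (r, k) * phiw a L K X $$ (k, c))"
    by (rule mult_entry[OF phiw_carrier phiw_carrier r c])
  also have "\<dots> = (\<Sum>k<2 ^ K. if agree b L r k then
        (\<lambda>(j::nat) (k::nat). Y $$ (?mb r, j) * sg b L k (?mb r) j * phiw a L K X $$ (k, c)) (mid b L k) k else 0)"
    by (rule sum.cong) (auto simp: phiw_entry[OF Y r])
  also have "\<dots> = (\<Sum>j<2 ^ L. Y $$ (?mb r, j) * sg b L (repl b L r j) (?mb r) j * phiw a L K X $$ (repl b L r j, c))"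
    by (rule sum_window[OF r bK])
  also have "\<dots> = (\<Sum>j<2 ^ L. if j = ?mb c then
       (if agree2 a b L r c then Y $$ (?mb r, j) * sg b L (repl b L r j) (?mb r) j * X $$ (?ma r, ?ma c) else 0) else 0)"
  proof (rule sum.cong)
    fix j :: nat assume "j \<in> {..<2 ^ L}"
    then have j: "j < 2 ^ L" by simp
    show "Y $$ (?mb r, j) * sg b L (repl b L r j) (?mb r) j * phiw a L K X $$ (repl b L r j, c) = (if j = ?mb c then
       (if agree2 a b L r c then Y $$ (?mb r, j) * sg b L (repl b L r j) (?mb r) j * X $$ (?ma r, ?ma c) else 0) else 0)"
      using phiw_even_entry[OF X g repl_lt[OF r j bK] c] agree_repl_other[OF d' j] mid_repl_other[OF d' j]
        agree2_sym[of a b L r c]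
      by auto
  qed simp
  also have "\<dots> = (if agree2 a b L r c then Y $$ (?mb r, ?mb c) * sg b L (repl b L r (?mb c)) (?mb r) (?mb c) * X $$ (?ma r, ?ma c) else 0)"
    by (rule sum_single[OF mid_lt])
  also have "\<dots> = V"
  proof (cases "agree2 a b L r c \<and> X $$ (?ma r, ?ma c) \<noteq> 0")
    case True
    then have ag: "agree2 a b L r c" and nz: "X $$ (?ma r, ?ma c) \<noteq> 0" by auto
    have ev: "even (pcb L (?ma r) + pcb L (?ma c))" using nz g mid_lt unfolding gr_def by blast
    have s1: "sg b L (repl b L r (?mb c)) (?mb r) (?mb c) = sg b L r (?mb r) (?mb c)"
      using sg_agree[OF agree_sym[OF agree_repl[OF mid_lt]]] .
    have "even (pcb b r) = even (pcb b c)"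
    proof (cases "a + L \<le> b")
      case True then show ?thesis by (rule pcb_parity[OF _ ag ev])
    next
      case False
      then have "b + L \<le> a" using d by simp
      then have "pcb b r = pcb b c" unfolding pcb_def
        by (intro arg_cong[where f=card]) (use ag in \<open>auto simp: agree2_def\<close>)
      then show ?thesis by simp
    qed
    then have "sg b L r (?mb r) (?mb c) = sg b L c (?mb r) (?mb c)" by (rule sg_par)
    then show ?thesis using s1 ag unfolding V_def by simp
  next
    case False then show ?thesis unfolding V_def by auto
  qed
  finally have RHS: "(phiw b L K Y * phiw a L K X) $$ (r, c) = V" .
  show "(phiw a L K X * phiw b L K Y) $$ (r, c) = (phiw b L K Y * phiw a L K X) $$ (r, c)"
    using LHS RHS by simp
qed auto



lemma mexp_carrier: "B \<in> carrier_mat n n \<Longrightarrow> mexp B \<in> carrier_mat n n"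
  by (simp add: mexp_def)

lemma mexp_entry: "B \<in> carrier_mat n n \<Longrightarrow> i < n \<Longrightarrow> j < n \<Longrightarrow>
  mexp B $$ (i, j) = (\<Sum>k. (B ^\<^sub>m k) $$ (i, j) / of_nat (fact k))"
  by (simp add: mexp_def)

lemma pow_bound:
  fixes B :: "complex mat"
  assumes B: "B \<in> carrier_mat n n" and Cb: "\<And>i j. i < n \<Longrightarrow> j < n \<Longrightarrow> norm (B $$ (i, j)) \<le> C"
  shows "i < n \<Longrightarrow> j < n \<Longrightarrow> norm ((B ^\<^sub>m k) $$ (i, j)) \<le> (real n * C) ^ k"
proof (induction k arbitrary: i j)
  case 0 then show ?case using B by simp
next
  case (Suc k)
  have C0: "0 \<le> C" using Cb[OF Suc.prems(1) Suc.prems(1)] norm_ge_zero order_trans by blast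
  have "(B ^\<^sub>m Suc k) $$ (i, j) = (\<Sum>l<n. (B ^\<^sub>m k) $$ (i, l) * B $$ (l, j))"
    using mult_entry[OF pow_carrier_mat[OF B] B Suc.prems] by simp
  then have "norm ((B ^\<^sub>m Suc k) $$ (i, j)) \<le> (\<Sum>l<n. norm ((B ^\<^sub>m k) $$ (i, l)) * norm (B $$ (l, j)))"
    by (metis (no_types, lifting) norm_mult norm_sum sum.cong)
  also have "\<dots> \<le> (\<Sum>l<n. (real n * C) ^ k * C)"
    by (rule sum_mono) (use Suc Cb C0 in \<open>auto intro!: mult_mono\<close>)
  also have "\<dots> = (real n * C) ^ Suc k" by (simp add: algebra_simps)
  finally show ?case .
qed

lemma mexp_summable:
  fixes B :: "complex mat"
  assumes B: "B \<in> carrier_mat n n" and i: "i < n" and j: "j < n"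
  shows "summable (\<lambda>k. (B ^\<^sub>m k) $$ (i, j) / of_nat (fact k))"
proof -
  define C where "C = (\<Sum>p<n. \<Sum>q<n. norm (B $$ (p, q)))"
  have Cb: "norm (B $$ (p, q)) \<le> C" if "p < n" "q < n" for p q
  proof -
    have "norm (B $$ (p, q)) \<le> (\<Sum>q<n. norm (B $$ (p, q)))"
      by (rule member_le_sum) (use that in auto)
    also have "\<dots> \<le> C" unfolding C_def
      by (rule member_le_sum[where f="\<lambda>p. \<Sum>q<n. norm (B $$ (p, q))"]) (use that in \<open>auto intro: sum_nonneg\<close>)
    finally show ?thesis .
  qed
  show ?thesis
  proof (rule summable_comparison_test'[OF summable_exp[of "real n * C"]])
    fix k :: nat
    have "norm ((B ^\<^sub>m k) $$ (i, j) / of_nat (fact k)) = norm ((B ^\<^sub>m k) $$ (i, j)) / fact k"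
      by (simp add: norm_divide)
    also have "\<dots> \<le> (real n * C) ^ k / fact k"
      by (rule divide_right_mono) (use pow_bound[OF B Cb i j] in auto)
    also have "\<dots> = inverse (fact k) * (real n * C) ^ k" by (simp add: field_simps)
    finally show "norm ((B ^\<^sub>m k) $$ (i, j) / of_nat (fact k)) \<le> inverse (fact k) * (real n * C) ^ k" .
  qed
qed

lemma adj_mult:
  fixes A B :: "complex mat"
  assumes A: "A \<in> carrier_mat n k" and B: "B \<in> carrier_mat k m"
  shows "mat_adjoint (A * B) = mat_adjoint B * mat_adjoint A"
proof (rule eq_matI)
  fix i j assume "i < dim_row (mat_adjoint B * mat_adjoint A)" "j < dim_col (mat_adjoint B * mat_adjoint A)"
  then have i: "i < m" and j: "j < n" using A B by auto
  have "mat_adjoint (A * B) $$ (i, j) = cnj ((A * B) $$ (j, i))" using A B i j by simp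
  also have "\<dots> = (\<Sum>l<k. cnj (B $$ (l, i)) * cnj (A $$ (j, l)))"
    using mult_entry[OF A B j i] by (simp add: mult.commute)
  also have "\<dots> = (mat_adjoint B * mat_adjoint A) $$ (i, j)"
    using mult_entry[OF adj_carrier[OF B] adj_carrier[OF A] i j] A B i j by (auto intro!: sum.cong)
  finally show "mat_adjoint (A * B) $$ (i, j) = (mat_adjoint B * mat_adjoint A) $$ (i, j)" .
qed (use A B in auto)

lemma adj_one: "mat_adjoint (1\<^sub>m n :: complex mat) = 1\<^sub>m n"
  by (rule eq_matI) auto

lemma pow_commute:
  assumes A: "(A :: complex mat) \<in> carrier_mat n n"
  shows "A * A ^\<^sub>m k = A ^\<^sub>m k * A"
proof (induction k)
  case 0 then show ?case using A by simp
next
  case (Suc k)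
  have "A * A ^\<^sub>m Suc k = A * (A ^\<^sub>m k * A)" by simp
  also have "\<dots> = (A * A ^\<^sub>m k) * A" using A by (metis assoc_mult_mat pow_carrier_mat)
  also have "\<dots> = A ^\<^sub>m Suc k * A" using Suc by simp
  finally show ?case .
qed

lemma adj_pow:
  fixes B :: "complex mat"
  assumes B: "B \<in> carrier_mat n n"
  shows "mat_adjoint (B ^\<^sub>m k) = mat_adjoint B ^\<^sub>m k"
proof (induction k)
  case 0 then show ?case using B by (simp add: adj_one)
next
  case (Suc k)
  have "mat_adjoint (B ^\<^sub>m Suc k) = mat_adjoint B * mat_adjoint (B ^\<^sub>m k)"
    using adj_mult[OF pow_carrier_mat[OF B] B] by simp
  also have "\<dots> = mat_adjoint B * (mat_adjoint B ^\<^sub>m k)" using Suc by simp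
  also have "\<dots> = mat_adjoint B ^\<^sub>m Suc k"
    using pow_commute[OF adj_carrier[OF B]] by simp
  finally show ?case .
qed

lemma mexp_adj:
  assumes B: "B \<in> carrier_mat n n"
  shows "mat_adjoint (mexp B) = mexp (mat_adjoint B)"
proof (rule eq_matI)
  fix i j assume "i < dim_row (mexp (mat_adjoint B))" "j < dim_col (mexp (mat_adjoint B))"
  then have i: "i < n" and j: "j < n" using B by (auto simp: mexp_def)
  have "mat_adjoint (mexp B) $$ (i, j) = cnj (\<Sum>k. (B ^\<^sub>m k) $$ (j, i) / of_nat (fact k))"
    using mexp_carrier[OF B] i j mexp_entry[OF B j i] by simp
  also have "\<dots> = (\<Sum>k. cnj ((B ^\<^sub>m k) $$ (j, i) / of_nat (fact k)))"
  proof -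
    have "(\<lambda>k. (B ^\<^sub>m k) $$ (j, i) / of_nat (fact k)) sums (\<Sum>k. (B ^\<^sub>m k) $$ (j, i) / of_nat (fact k))"
      using mexp_summable[OF B j i] by (simp add: summable_sums)
    then have "(\<lambda>k. cnj ((B ^\<^sub>m k) $$ (j, i) / of_nat (fact k))) sums cnj (\<Sum>k. (B ^\<^sub>m k) $$ (j, i) / of_nat (fact k))"
      by (simp only: sums_cnj)
    then show ?thesis by (simp add: sums_iff)
  qed
  also have "\<dots> = (\<Sum>k. (mat_adjoint B ^\<^sub>m k) $$ (i, j) / of_nat (fact k))"
    by (rule suminf_cong) (use B i j in \<open>simp add: adj_pow[OF B, symmetric]\<close>)
  also have "\<dots> = mexp (mat_adjoint B) $$ (i, j)" using mexp_entry[OF adj_carrier[OF B] i j] by simp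
  finally show "mat_adjoint (mexp B) $$ (i, j) = mexp (mat_adjoint B) $$ (i, j)" .
qed (use B in \<open>auto simp: mexp_def\<close>)

lemma adj_smult: "mat_adjoint (x \<cdot>\<^sub>m B) = cnj x \<cdot>\<^sub>m mat_adjoint B"
  by (rule eq_matI) auto

lemma gr_pow: "B \<in> carrier_mat (2 ^ L) (2 ^ L) \<Longrightarrow> gr L False B \<Longrightarrow> gr L False (B ^\<^sub>m k)"
proof (induction k)
  case 0 then show ?case using gr_one by simp
next
  case (Suc k) then show ?case
    using gr_mult[OF pow_carrier_mat[OF Suc.prems(1)] Suc.prems(1) Suc.IH[OF Suc.prems] Suc.prems(2)] by simp
qed

lemma gr_mexp:
  assumes B: "B \<in> carrier_mat (2 ^ L) (2 ^ L)" and g: "gr L False B"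
  shows "gr L False (mexp B)"
  unfolding gr_def
proof (intro allI impI)
  fix r c assume r: "r < 2 ^ L" and c: "c < 2 ^ L" and p: "odd (pcb L r + pcb L c) \<noteq> False"
  have "\<And>k. (B ^\<^sub>m k) $$ (r, c) = 0" using gr_pow[OF B g] r c p unfolding gr_def by blast
  then show "mexp B $$ (r, c) = 0" using mexp_entry[OF B r c] by simp
qed

lemma phiw_pow:
  assumes B: "B \<in> carrier_mat (2 ^ L) (2 ^ L)" and aLK: "a + L \<le> K"
  shows "phiw a L K (B ^\<^sub>m k) = phiw a L K B ^\<^sub>m k"
proof (induction k)
  case 0 then show ?case using B by (simp add: phiw_one)
next
  case (Suc k) then show ?case using phiw_mult[OF pow_carrier_mat[OF B] B aLK] by simp
qed

lemma mexp_phiw: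
  assumes B: "B \<in> carrier_mat (2 ^ L) (2 ^ L)" and g: "gr L False B" and aLK: "a + L \<le> K"
  shows "mexp (phiw a L K B) = phiw a L K (mexp B)"
proof (rule eq_matI)
  fix r c assume "r < dim_row (phiw a L K (mexp B))" "c < dim_col (phiw a L K (mexp B))"
  then have r: "r < 2 ^ K" and c: "c < 2 ^ K" by auto
  have "mexp (phiw a L K B) $$ (r, c) = (\<Sum>k. (phiw a L K B ^\<^sub>m k) $$ (r, c) / of_nat (fact k))"
    by (rule mexp_entry[OF phiw_carrier r c])
  also have "\<dots> = (\<Sum>k. if agree a L r c then (B ^\<^sub>m k) $$ (mid a L r, mid a L c) / of_nat (fact k) else 0)"
    by (rule suminf_cong)
       (simp add: phiw_pow[OF B aLK, symmetric] phiw_even_entry[OF pow_carrier_mat[OF B] gr_pow[OF B g] r c])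
  also have "\<dots> = (if agree a L r c then mexp B $$ (mid a L r, mid a L c) else 0)"
    using mexp_entry[OF B mid_lt mid_lt] by simp
  also have "\<dots> = phiw a L K (mexp B) $$ (r, c)"
    using phiw_even_entry[OF mexp_carrier[OF B] gr_mexp[OF B g] r c] by simp
  finally show "mexp (phiw a L K B) $$ (r, c) = phiw a L K (mexp B) $$ (r, c)" .
qed (auto simp: mexp_def)



lemma mprod_carrier: "(\<forall>x\<in>set xs. x \<in> carrier_mat D D) \<Longrightarrow> mprod D xs \<in> carrier_mat D D"
  by (induction xs) (auto simp: mprod_def)

lemma mprod_Cons: "mprod D (x # xs) = x * mprod D xs"
  by (simp add: mprod_def)

lemma mprod_Nil: "mprod D [] = 1\<^sub>m D"
  by (simp add: mprod_def)

lemma mprod_append: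
  assumes "\<forall>x\<in>set xs. x \<in> carrier_mat D D" "\<forall>x\<in>set ys. (x :: complex mat) \<in> carrier_mat D D"
  shows "mprod D (xs @ ys) = mprod D xs * mprod D ys"
  using assms(1)
proof (induction xs)
  case Nil then show ?case using mprod_carrier[OF assms(2)] by (simp add: mprod_def)
next
  case (Cons x xs)
  then show ?case using mprod_carrier[OF assms(2)] mprod_carrier[of xs D]
    by (simp add: mprod_Cons assoc_mult_mat[of x D D _ D _ D])
qed

lemma mprod_adj:
  assumes "\<forall>x\<in>set xs. (x :: complex mat) \<in> carrier_mat D D"
  shows "mat_adjoint (mprod D xs) = mprod D (rev (map mat_adjoint xs))"
  using assms
proof (induction xs)
  case Nil then show ?case by (simp add: mprod_def adj_one)
next
  case (Cons x xs)
  have x: "x \<in> carrier_mat D D" and xs: "\<forall>x\<in>set xs. x \<in> carrier_mat D D" using Cons.prems by auto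
  have "mat_adjoint (mprod D (x # xs)) = mat_adjoint (mprod D xs) * mat_adjoint x"
    using adj_mult[OF x mprod_carrier[OF xs]] by (simp add: mprod_Cons)
  also have "\<dots> = mprod D (rev (map mat_adjoint xs)) * mprod D [mat_adjoint x]"
  proof -
    have "mprod D [mat_adjoint x] = mat_adjoint x" using x by (simp add: mprod_def)
    then show ?thesis using Cons.IH[OF xs] by simp
  qed
  also have "\<dots> = mprod D (rev (map mat_adjoint (x # xs)))"
    using mprod_append[of "rev (map mat_adjoint xs)" D "[mat_adjoint x]"] x xs by auto
  finally show ?case .
qed

lemma comm_step:
  assumes "(X :: complex mat) \<in> carrier_mat D D" "Y \<in> carrier_mat D D" "R \<in> carrier_mat D D" "X * Y = Y * X"
  shows "X * (Y * R) = Y * (X * R)"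
proof -
  have "X * (Y * R) = (X * Y) * R" by (rule assoc_mult_mat[OF assms(1,2,3), symmetric])
  also have "\<dots> = (Y * X) * R" using assms(4) by simp
  also have "\<dots> = Y * (X * R)" by (rule assoc_mult_mat[OF assms(2,1,3)])
  finally show ?thesis .
qed

lemma comm_mprod:
  assumes X: "(X :: complex mat) \<in> carrier_mat D D"
    and ys: "\<forall>Y\<in>set ys. Y \<in> carrier_mat D D \<and> X * Y = Y * X"
  shows "X * mprod D ys = mprod D ys * X"
  using ys
proof (induction ys)
  case Nil then show ?case using X by (simp add: mprod_def)
next
  case (Cons y ys)
  have y: "y \<in> carrier_mat D D" "X * y = y * X" and ys': "\<forall>Y\<in>set ys. Y \<in> carrier_mat D D \<and> X * Y = Y * X"
    using Cons.prems by auto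
  have M: "mprod D ys \<in> carrier_mat D D" using mprod_carrier ys' by blast
  have "X * mprod D (y # ys) = y * (X * mprod D ys)"
    unfolding mprod_Cons by (rule comm_step[OF X y(1) M y(2)])
  also have "\<dots> = y * (mprod D ys * X)" using Cons.IH[OF ys'] by simp
  also have "\<dots> = mprod D (y # ys) * X" using X y M by (simp add: mprod_Cons assoc_mult_mat)
  finally show ?case .
qed

lemma conj_prod:
  fixes e Q f :: "nat \<Rightarrow> complex mat"
  assumes car: "\<forall>t\<in>set ts. e t \<in> carrier_mat D D \<and> Q t \<in> carrier_mat D D \<and> f t \<in> carrier_mat D D"
    and dist: "distinct ts"
    and comm: "\<forall>s\<in>set ts. \<forall>t\<in>set ts. s \<noteq> t \<longrightarrow>
       e s * Q t = Q t * e s \<and> f s * Q t = Q t * f s \<and> f s * e t = e t * f s \<and> f s * f t = f t * f s"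
  shows "mprod D (map e ts) * mprod D (map Q ts) * mprod D (rev (map f ts)) = mprod D (map (\<lambda>t. e t * Q t * f t) ts)"
  using car dist comm
proof (induction ts)
  case Nil then show ?case by (simp add: mprod_def)
next
  case (Cons t ts)
  have cs: "\<forall>t\<in>set ts. e t \<in> carrier_mat D D \<and> Q t \<in> carrier_mat D D \<and> f t \<in> carrier_mat D D"
    using Cons.prems(1) by auto
  have IH: "mprod D (map e ts) * mprod D (map Q ts) * mprod D (rev (map f ts)) = mprod D (map (\<lambda>t. e t * Q t * f t) ts)"
    using Cons.IH[OF cs] Cons.prems(2,3) by auto
  define A where "A = e t"
  define B where "B = Q t"
  define C where "C = f t"
  define E where "E = mprod D (map e ts)"
  define P where "P = mprod D (map Q ts)"
  define F where "F = mprod D (rev (map f ts))"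
  have cA: "A \<in> carrier_mat D D" "B \<in> carrier_mat D D" "C \<in> carrier_mat D D"
    using Cons.prems(1) by (auto simp: A_def B_def C_def)
  have cE: "E \<in> carrier_mat D D" "P \<in> carrier_mat D D" "F \<in> carrier_mat D D"
    unfolding E_def P_def F_def using cs by (auto intro!: mprod_carrier)
  have tn: "t \<notin> set ts" using Cons.prems(2) by simp
  have EB: "B * E = E * B" unfolding E_def B_def
    by (rule comm_mprod) (use cs Cons.prems(1,3) tn in \<open>auto\<close>)
  have CE: "C * E = E * C" unfolding E_def C_def
    by (rule comm_mprod) (use cs Cons.prems(1,3) tn in \<open>auto\<close>)
  have CP: "C * P = P * C" unfolding P_def C_def
    by (rule comm_mprod) (use cs Cons.prems(1,3) tn in \<open>auto\<close>)
  have CF: "C * F = F * C" unfolding F_def C_def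
    by (rule comm_mprod) (use cs Cons.prems(1,3) tn in \<open>auto\<close>)
  have L: "mprod D (map e (t # ts)) = A * E" "mprod D (map Q (t # ts)) = B * P"
    "mprod D (rev (map f (t # ts))) = F * C"
    using mprod_append[of "rev (map f ts)" D "[f t]"] cs Cons.prems(1) right_mult_one_mat[of "f t" D D]
    by (auto simp: A_def B_def C_def E_def P_def F_def mprod_Cons mprod_Nil)
  have R: "mprod D (map (\<lambda>t. e t * Q t * f t) (t # ts)) = (A * B * C) * (E * P * F)"
    using IH by (simp add: mprod_Cons A_def B_def C_def E_def P_def F_def)
  have mD: "\<And>X Y. X \<in> carrier_mat D D \<Longrightarrow> Y \<in> carrier_mat D D \<Longrightarrow> X * Y \<in> carrier_mat D D"
    by auto
  have aD: "\<And>X Y Z. X \<in> carrier_mat D D \<Longrightarrow> Y \<in> carrier_mat D D \<Longrightarrow> Z \<in> carrier_mat D D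
     \<Longrightarrow> X * Y * Z = X * (Y * Z)"
    using assoc_mult_mat by blast
  have i1: "F * C = C * F" using CF by simp
  have i2: "P * (C * F) = C * (P * F)"
    using comm_step[of P D C F] cA cE CP by simp
  have i3: "E * (C * (P * F)) = C * (E * (P * F))"
    using comm_step[of E D C "P * F"] cA cE CE by simp
  have inner: "E * (P * (F * C)) = C * (E * (P * F))" using i1 i2 i3 by simp
  have "(A * E) * (B * P) * (F * C) = A * (E * (B * (P * (F * C))))"
    using cA cE by (simp add: aD mD)
  also have "\<dots> = A * (B * (E * (P * (F * C))))"
    using comm_step[of E D B "P * (F * C)"] cA cE EB by simp
  also have "\<dots> = A * (B * (C * (E * (P * F))))" using inner by simp
  also have "\<dots> = (A * B * C) * (E * P * F)"
    using cA cE by (simp add: aD mD)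
  finally show ?case using L R by simp
qed



theorem lemma3:
  fixes L N :: nat and \<epsilon> :: real and H :: "complex mat"
    and Ob :: "nat \<Rightarrow> complex mat"
  assumes "L \<ge> 1" and "N \<ge> 1" and "\<epsilon> > 0"
    and "H \<in> carrier_mat (2 ^ L) (2 ^ L)"
    and "hermitian_mat H"
    and "parity_preserving L H"
    and "\<forall>t < N. Ob t \<in> carrier_mat (2 ^ L) (2 ^ L)"
  shows "(\<forall>t < N. \<forall>t' < N.
            slice L N t H * slice L N t' H - slice L N t' H * slice L N t H
              = 0\<^sub>m (2 ^ (N * L)) (2 ^ (N * L)))
       \<and> (let D = 2 ^ (N * L);
              V = mprod D (map (\<lambda>t. mexp ((\<i> * of_real (\<epsilon> * real t)) \<cdot>\<^sub>m slice L N t H)) [0..<N])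
          in V * mprod D (map (\<lambda>t. slice L N t (Ob t)) [0..<N]) * mat_adjoint V
             = mprod D (map (\<lambda>t. mexp ((\<i> * of_real (\<epsilon> * real t)) \<cdot>\<^sub>m slice L N t H)
                                 * slice L N t (Ob t)
                                 * mexp ((- \<i> * of_real (\<epsilon> * real t)) \<cdot>\<^sub>m slice L N t H)) [0..<N]))"
proof -
  define K where "K = N * L"
  have Hc: "H \<in> carrier_mat (2 ^ L) (2 ^ L)" using assms(4) .
  have Hh: "mat_adjoint H = H" using assms(5) by (simp add: hermitian_mat_def)
  have gH: "gr L False H" using gr_pp[OF assms(6)] .
  have Obc: "\<And>t. t < N \<Longrightarrow> Ob t \<in> carrier_mat (2 ^ L) (2 ^ L)" using assms(7) by blast
  have slc: "\<And>t. t < N \<Longrightarrow> slice L N t = phiw (t * L) L K" using slice_eq K_def by simp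
  have tK: "t * L + L \<le> K" if "t < N" for t
  proof -
    have "t * L + L = Suc t * L" by simp
    also have "\<dots> \<le> N * L" using that by (intro mult_le_mono1) simp
    finally show ?thesis by (simp add: K_def)
  qed
  have disj: "s * L + L \<le> t * L \<or> t * L + L \<le> s * L" if "s \<noteq> t" for s t :: nat
  proof (cases "s < t")
    case True
    then have "s * L + L = Suc s * L" "Suc s \<le> t" by simp_all
    then show ?thesis using mult_le_mono1[of "Suc s" t L] by simp
  next
    case False
    then have "t < s" using that by simp
    then have "t * L + L = Suc t * L" "Suc t \<le> s" by simp_all
    then show ?thesis using mult_le_mono1[of "Suc t" s L] by simp
  qed
  have comm: "phiw (s * L) L K X * phiw (t * L) L K Y = phiw (t * L) L K Y * phiw (s * L) L K X"
    if "s < N" "t < N" "s \<noteq> t" "X \<in> carrier_mat (2 ^ L) (2 ^ L)" "Y \<in> carrier_mat (2 ^ L) (2 ^ L)"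
      "gr L False X" for s t X Y
    by (rule phiw_comm[OF disj[OF that(3)] tK[OF that(1)] tK[OF that(2)] that(4,5,6)])
  have part1: "\<forall>t < N. \<forall>t' < N.
            slice L N t H * slice L N t' H - slice L N t' H * slice L N t H
              = 0\<^sub>m (2 ^ (N * L)) (2 ^ (N * L))"
  proof (intro allI impI)
    fix t t' assume t: "t < N" and t': "t' < N"
    have eq: "slice L N t H * slice L N t' H = slice L N t' H * slice L N t H"
    proof (cases "t = t'")
      case False then show ?thesis using comm[OF t t' False Hc Hc gH] slc[OF t] slc[OF t'] by simp
    qed simp
    show "slice L N t H * slice L N t' H - slice L N t' H * slice L N t H = 0\<^sub>m (2 ^ (N * L)) (2 ^ (N * L))"
      unfolding eq by (rule eq_matI) (use slc[OF t'] slc[OF t] in \<open>auto simp: K_def\<close>)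
  qed
  define c where "c t = \<i> * complex_of_real (\<epsilon> * real t)" for t
  define c' where "c' t = - \<i> * complex_of_real (\<epsilon> * real t)" for t
  define e where "e t = mexp (c t \<cdot>\<^sub>m slice L N t H)" for t
  define f where "f t = mexp (c' t \<cdot>\<^sub>m slice L N t H)" for t
  define Q where "Q t = slice L N t (Ob t)" for t
  have cc: "cnj (c t) = c' t" for t by (simp add: c_def c'_def)
  have gc: "gr L False (x \<cdot>\<^sub>m H)" for x using gr_smult[OF Hc gH] .
  have cxH: "x \<cdot>\<^sub>m H \<in> carrier_mat (2 ^ L) (2 ^ L)" for x using Hc by simp
  have e_eq: "e t = phiw (t * L) L K (mexp (c t \<cdot>\<^sub>m H))" if t: "t < N" for t
    unfolding e_def slc[OF t] phiw_smult[OF Hc, symmetric] using mexp_phiw[OF cxH gc tK[OF t]] by simp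
  have f_eq: "f t = phiw (t * L) L K (mexp (c' t \<cdot>\<^sub>m H))" if t: "t < N" for t
    unfolding f_def slc[OF t] phiw_smult[OF Hc, symmetric] using mexp_phiw[OF cxH gc tK[OF t]] by simp
  have Q_eq: "Q t = phiw (t * L) L K (Ob t)" if t: "t < N" for t
    unfolding Q_def slc[OF t] ..
  have me: "mexp (x \<cdot>\<^sub>m H) \<in> carrier_mat (2 ^ L) (2 ^ L)" "gr L False (mexp (x \<cdot>\<^sub>m H))" for x
    using mexp_carrier[OF cxH] gr_mexp[OF cxH gc] by auto
  have adj_e: "mat_adjoint (e t) = f t" if t: "t < N" for t
  proof -
    have "mat_adjoint (e t) = mexp (mat_adjoint (c t \<cdot>\<^sub>m phiw (t * L) L K H))"
      unfolding e_def slc[OF t] by (rule mexp_adj[OF smult_carrier_mat[OF phiw_carrier]])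
    also have "\<dots> = mexp (c' t \<cdot>\<^sub>m phiw (t * L) L K H)"
      by (simp add: adj_smult phiw_adj[OF Hc, symmetric] Hh cc)
    also have "\<dots> = f t" unfolding f_def slc[OF t] ..
    finally show ?thesis .
  qed
  have car: "\<forall>t\<in>set [0..<N]. e t \<in> carrier_mat (2 ^ K) (2 ^ K) \<and> Q t \<in> carrier_mat (2 ^ K) (2 ^ K)
      \<and> f t \<in> carrier_mat (2 ^ K) (2 ^ K)"
    using e_eq f_eq Q_eq by auto
  have cm: "\<forall>s\<in>set [0..<N]. \<forall>t\<in>set [0..<N]. s \<noteq> t \<longrightarrow>
       e s * Q t = Q t * e s \<and> f s * Q t = Q t * f s \<and> f s * e t = e t * f s \<and> f s * f t = f t * f s"
  proof (intro ballI impI)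
    fix s t assume s: "s \<in> set [0..<N]" and t: "t \<in> set [0..<N]" and st: "s \<noteq> t"
    then have s': "s < N" and t': "t < N" by auto
    show "e s * Q t = Q t * e s \<and> f s * Q t = Q t * f s \<and> f s * e t = e t * f s \<and> f s * f t = f t * f s"
      unfolding e_eq[OF s'] e_eq[OF t'] f_eq[OF s'] f_eq[OF t'] Q_eq[OF t']
      using comm[OF s' t' st me(1) Obc[OF t'] me(2)] comm[OF s' t' st me(1) me(1) me(2)]
      by blast
  qed
  have main: "mprod (2 ^ K) (map e [0..<N]) * mprod (2 ^ K) (map Q [0..<N]) * mprod (2 ^ K) (rev (map f [0..<N]))
      = mprod (2 ^ K) (map (\<lambda>t. e t * Q t * f t) [0..<N])"
    by (rule conj_prod[OF car _ cm]) simp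
  have adjV: "mat_adjoint (mprod (2 ^ K) (map e [0..<N])) = mprod (2 ^ K) (rev (map f [0..<N]))"
  proof -
    have "mat_adjoint (mprod (2 ^ K) (map e [0..<N])) = mprod (2 ^ K) (rev (map mat_adjoint (map e [0..<N])))"
      by (rule mprod_adj) (use car in auto)
    also have "map mat_adjoint (map e [0..<N]) = map f [0..<N]"
      using adj_e by auto
    finally show ?thesis .
  qed
  have part2: "(let D = 2 ^ (N * L);
              V = mprod D (map (\<lambda>t. mexp ((\<i> * of_real (\<epsilon> * real t)) \<cdot>\<^sub>m slice L N t H)) [0..<N])
          in V * mprod D (map (\<lambda>t. slice L N t (Ob t)) [0..<N]) * mat_adjoint V
             = mprod D (map (\<lambda>t. mexp ((\<i> * of_real (\<epsilon> * real t)) \<cdot>\<^sub>m slice L N t H)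
                                 * slice L N t (Ob t)
                                 * mexp ((- \<i> * of_real (\<epsilon> * real t)) \<cdot>\<^sub>m slice L N t H)) [0..<N]))"
    using main adjV unfolding Let_def e_def[abs_def] f_def[abs_def] Q_def[abs_def] c_def c'_def K_def
    by simp
  show ?thesis using part1 part2 by blast
qed

end
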